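(* Let $\kappa=\frac4{27}$. For every positive integer $n$ and every $x$ the following four identities hold: $$\frac{(3n+1)x}{\kappa}\,{}_3F_2\left[\begin{matrix}-n,\frac{n+1}2,\frac{n+2}2\\ \frac23,\frac43\end{matrix};x\right]+3\,{}_3F_2\left[\begin{matrix}-n-1,\frac{n+2}2,\frac{n+1}2\\ \frac13,\frac23\end{matrix};x\right]-6\,{}_3F_2\left[\begin{matrix}-n,\frac{n+1}2,\frac n2\\ \frac13,\frac23\end{matrix};x\right]+3\,{}_3F_2\left[\begin{matrix}-n+1,\frac n2,\frac{n-1}2\\ \frac13,\frac23\end{matrix};x\right]=0;$$ $$\frac{(n+1)(3n+2)x}{2\kappa}\,{}_3F_2\left[\begin{matrix}-n,\frac{n+3}2,\frac{n+2}2\\ \frac43,\frac53\end{matrix};x\right]+(3n+4)\,{}_3F_2\left[\begin{matrix}-n-1,\frac{n+2}2,\frac{n+3}2\\ \frac23,\frac43\end{matrix};x\right]-2(3n+1)\,{}_3F_2\left[\begin{matrix}-n,\frac{n+1}2,\frac{n+2}2\\ \frac23,\frac43\end{matrix};x\right]+(3n-2)\,{}_3F_2\left[\begin{matrix}-n+1,\frac n2,\frac{n+1}2\\ \frac23,\frac43\end{matrix};x\right]=0;$$ $$\frac{(n+1)x}{\kappa}\,{}_3F_2\left[\begin{matrix}-n,\frac{n+3}2,\frac{n+2}2\\ \frac23,\frac43\end{matrix};x\right]+{}_3F_2\left[\begin{matrix}-n-1,\frac{n+2}2,\frac{n+3}2\\ \frac13,\frac23\end{matrix};x\right]-2\,{}_3F_2\left[\begin{matrix}-n,\frac{n+1}2,\frac{n+2}2\\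 \frac13,\frac23\end{matrix};x\right]+{}_3F_2\left[\begin{matrix}-n+1,\frac n2,\frac{n+1}2\\ \frac13,\frac23\end{matrix};x\right]=0;$$ $$\frac{(n+1)(n+2)x}{2\kappa}\,{}_3F_2\left[\begin{matrix}-n,\frac{n+4}2,\frac{n+3}2\\ \frac43,\frac53\end{matrix};x\right]+(n+2)\,{}_3F_2\left[\begin{matrix}-n-1,\frac{n+4}2,\frac{n+3}2\\ \frac23,\frac43\end{matrix};x\right]-2(n+1)\,{}_3F_2\left[\begin{matrix}-n,\frac{n+3}2,\frac{n+2}2\\ \frac23,\frac43\end{matrix};x\right]+n\,{}_3F_2\left[\begin{matrix}-n+1,\frac{n+2}2,\frac{n+1}2\\ \frac23,\frac43\end{matrix};x\right]=0.$$
   Context: ${}_3F_2\left[\begin{matrix}a_1,a_2,a_3\\ b_1,b_2\end{matrix};x\right]=\sum_{k\ge0}\frac{(a_1)_k(a_2)_k(a_3)_k}{(b_1)_k(b_2)_k}\frac{x^k}{k!}$, $(x)_k=x(x+1)\cdots(x+k-1)$, $(x)_0=1$; with $a_1$ a nonpositive integer these are polynomials in $x$. *)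

theory Defs
  imports "HOL-Analysis.Analysis"
begin

text \<open>In the statement a1 is always a nonpositive integer, so the series terminates.\<close>
definition hyp3F2 :: "complex \<Rightarrow> complex \<Rightarrow> complex \<Rightarrow> complex \<Rightarrow> complex \<Rightarrow> complex \<Rightarrow> complex" where
  "hyp3F2 a1 a2 a3 b1 b2 x =
     (\<Sum>k. pochhammer a1 k * pochhammer a2 k * pochhammer a3 k
           / (pochhammer b1 k * pochhammer b2 k) * x ^ k / fact k)"

definition kappa :: complex where "kappa = 4 / 27"

end

theory Submission
  imports Defs
begin

definition tc :: "complex \<Rightarrow> complex \<Rightarrow> complex \<Rightarrow> complex \<Rightarrow> complex \<Rightarrow> nat \<Rightarrow> complex" where
  "tc a1 a2 a3 b1 b2 k = pochhammer a1 k * pochhammer a2 k * pochhammer a3 k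
           / (pochhammer b1 k * pochhammer b2 k) / fact k"

lemma hyp_fin:
  assumes "\<And>k. k \<ge> M \<Longrightarrow> pochhammer a1 k = 0"
  shows "hyp3F2 a1 a2 a3 b1 b2 x = (\<Sum>k<M. tc a1 a2 a3 b1 b2 k * x^k)"
proof -
  have "hyp3F2 a1 a2 a3 b1 b2 x = (\<Sum>k<M. pochhammer a1 k * pochhammer a2 k * pochhammer a3 k
           / (pochhammer b1 k * pochhammer b2 k) * x ^ k / fact k)"
    unfolding hyp3F2_def by (rule suminf_finite) (auto simp: assms)
  then show ?thesis by (simp add: tc_def)
qed

lemma poch_zero:
  assumes "a = - of_nat m" "k > m"
  shows "pochhammer (a::complex) k = 0"
  using assms by (auto simp: pochhammer_eq_0_iff)

lemma half_poch:
  "pochhammer (a::complex) k * pochhammer (a + 1/2) k = pochhammer (2*a) (2*k) / 4^k"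
proof (induction k)
  case 0 then show ?case by simp
next
  case (Suc k)
  have e: "2 * Suc k = Suc (Suc (2*k))" by simp
  have "pochhammer a (Suc k) * pochhammer (a + 1/2) (Suc k)
       = (pochhammer a k * pochhammer (a + 1/2) k) * ((a + of_nat k) * (a + 1/2 + of_nat k))"
    by (simp add: pochhammer_Suc algebra_simps)
  also have "\<dots> = pochhammer (2*a) (2*k) / 4^k * ((a + of_nat k) * (a + 1/2 + of_nat k))"
    using Suc by simp
  also have "\<dots> = pochhammer (2*a) (2*k) * ((2*a + of_nat (2*k)) * (2*a + of_nat (Suc (2*k)))) / 4^Suc k"
    by (simp add: field_simps)
  also have "\<dots> = pochhammer (2*a) (2*Suc k) / 4^Suc k"
    unfolding e pochhammer_Suc by (simp add: algebra_simps)
  finally show ?case .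
qed

lemma d1: "pochhammer (1/3::complex) k * pochhammer (2/3) k * fact k = fact (3*k) / (27^k)"
proof (induction k)
  case 0 then show ?case by simp
next
  case (Suc k)
  have e: "3 * Suc k = Suc (Suc (Suc (3*k)))" by simp
  have "pochhammer (1/3::complex) (Suc k) * pochhammer (2/3) (Suc k) * fact (Suc k)
     = (pochhammer (1/3) k * pochhammer (2/3) k * fact k) * (((1/3) + of_nat k) * ((2/3) + of_nat k) * of_nat (Suc k))"
    by (simp add: pochhammer_Suc fact_Suc algebra_simps)
  also have "\<dots> = fact (3*k) / (27^k) * (((1/3) + of_nat k) * ((2/3) + of_nat k) * of_nat (Suc k))"
    using Suc by simp
  also have "\<dots> = fact (3*k) * (of_nat (Suc (3*k)) * of_nat (Suc (Suc (3*k))) * of_nat (Suc (Suc (Suc (3*k))))) / (27^Suc k)"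
    by (simp add: field_simps)
  also have "\<dots> = fact (3 * Suc k) / (27^Suc k)"
    unfolding e fact_Suc by (simp add: algebra_simps)
  finally show ?case .
qed

lemma d2: "pochhammer (2/3::complex) k * pochhammer (4/3) k * fact k = fact (3*k+1) / (27^k)"
proof (induction k)
  case 0 then show ?case by simp
next
  case (Suc k)
  have e: "3 * Suc k+1 = Suc (Suc (Suc (3*k+1)))" by simp
  have "pochhammer (2/3::complex) (Suc k) * pochhammer (4/3) (Suc k) * fact (Suc k)
     = (pochhammer (2/3) k * pochhammer (4/3) k * fact k) * (((2/3) + of_nat k) * ((4/3) + of_nat k) * of_nat (Suc k))"
    by (simp add: pochhammer_Suc fact_Suc algebra_simps)
  also have "\<dots> = fact (3*k+1) / (27^k) * (((2/3) + of_nat k) * ((4/3) + of_nat k) * of_nat (Suc k))"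
    using Suc by simp
  also have "\<dots> = fact (3*k+1) * (of_nat (Suc (3*k+1)) * of_nat (Suc (Suc (3*k+1))) * of_nat (Suc (Suc (Suc (3*k+1))))) / (27^Suc k)"
    by (simp add: field_simps)
  also have "\<dots> = fact (3 * Suc k+1) / (27^Suc k)"
    unfolding e fact_Suc by (simp add: algebra_simps)
  finally show ?case .
qed

lemma d3: "pochhammer (4/3::complex) k * pochhammer (5/3) k * fact k = fact (3*k+2) / (2*27^k)"
proof (induction k)
  case 0 then show ?case by simp
next
  case (Suc k)
  have e: "3 * Suc k+2 = Suc (Suc (Suc (3*k+2)))" by simp
  have "pochhammer (4/3::complex) (Suc k) * pochhammer (5/3) (Suc k) * fact (Suc k)
     = (pochhammer (4/3) k * pochhammer (5/3) k * fact k) * (((4/3) + of_nat k) * (5/3 + of_nat k) * of_nat (Suc k))"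
    by (simp add: pochhammer_Suc fact_Suc algebra_simps)
  also have "\<dots> = fact (3*k+2) / (2*27^k) * (((4/3) + of_nat k) * (5/3 + of_nat k) * of_nat (Suc k))"
    using Suc by simp
  also have "\<dots> = fact (3*k+2) * (of_nat (Suc (3*k+2)) * of_nat (Suc (Suc (3*k+2))) * of_nat (Suc (Suc (Suc (3*k+2))))) / (2*27^Suc k)"
    by (simp add: field_simps)
  also have "\<dots> = fact (3 * Suc k+2) / (2*27^Suc k)"
    unfolding e fact_Suc by (simp add: algebra_simps)
  finally show ?case .
qed


definition T1 :: "complex \<Rightarrow> complex \<Rightarrow> nat \<Rightarrow> complex" where
  "T1 a1 c k = pochhammer a1 k * pochhammer c (2*k) * 27^k / (4^k * fact (3*k))"
definition T2 :: "complex \<Rightarrow> complex \<Rightarrow> nat \<Rightarrow> complex" where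
  "T2 a1 c k = pochhammer a1 k * pochhammer c (2*k) * 27^k / (4^k * fact (3*k+1))"
definition T3 :: "complex \<Rightarrow> complex \<Rightarrow> nat \<Rightarrow> complex" where
  "T3 a1 c k = 2 * pochhammer a1 k * pochhammer c (2*k) * 27^k / (4^k * fact (3*k+2))"

lemma pair_poch:
  assumes "(a2 = c/2 \<and> a3 = (c+1)/2) \<or> (a3 = c/2 \<and> a2 = (c+1)/2)"
  shows "pochhammer a2 k * pochhammer a3 k = pochhammer (c::complex) (2*k) / 4^k"
proof -
  have e: "(c+1)/2 = c/2 + 1/2" by (simp add: add_divide_distrib)
  have h: "pochhammer (c/2) k * pochhammer (c/2 + 1/2) k = pochhammer c (2*k) / 4^k"
    using half_poch[of "c/2" k] by simp
  from assms show ?thesis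
  proof
    assume H: "a2 = c/2 \<and> a3 = (c+1)/2"
    have a2: "a2 = c/2" and a3: "a3 = c/2 + 1/2" using H e by auto
    show ?thesis unfolding a2 a3 by (rule h)
  next
    assume H: "a3 = c/2 \<and> a2 = (c+1)/2"
    have a3: "a3 = c/2" and a2: "a2 = c/2 + 1/2" using H e by auto
    show ?thesis unfolding a2 a3 using h by (simp add: mult.commute)
  qed
qed

lemma conv1:
  assumes "(a2 = c/2 \<and> a3 = (c+1)/2) \<or> (a3 = c/2 \<and> a2 = (c+1)/2)"
  shows "tc a1 a2 a3 (1/3) (2/3) k = T1 a1 c k"
proof -
  have "tc a1 a2 a3 (1/3) (2/3) k = pochhammer a1 k * (pochhammer a2 k * pochhammer a3 k)
     / (pochhammer (1/3) k * pochhammer (2/3) k * fact k)"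
    by (simp add: tc_def divide_divide_eq_left mult.assoc)
  also have "\<dots> = pochhammer a1 k * (pochhammer c (2*k) / 4^k) / (fact (3*k) / 27^k)"
    by (simp only: pair_poch[OF assms] d1)
  finally show ?thesis by (simp add: T1_def field_simps)
qed

lemma conv2:
  assumes "(a2 = c/2 \<and> a3 = (c+1)/2) \<or> (a3 = c/2 \<and> a2 = (c+1)/2)"
  shows "tc a1 a2 a3 (2/3) (4/3) k = T2 a1 c k"
proof -
  have "tc a1 a2 a3 (2/3) (4/3) k = pochhammer a1 k * (pochhammer a2 k * pochhammer a3 k)
     / (pochhammer (2/3) k * pochhammer (4/3) k * fact k)"
    by (simp add: tc_def divide_divide_eq_left mult.assoc)
  also have "\<dots> = pochhammer a1 k * (pochhammer c (2*k) / 4^k) / (fact (3*k+1) / 27^k)"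
    by (simp only: pair_poch[OF assms] d2)
  finally show ?thesis by (simp add: T2_def field_simps)
qed

lemma conv3:
  assumes "(a2 = c/2 \<and> a3 = (c+1)/2) \<or> (a3 = c/2 \<and> a2 = (c+1)/2)"
  shows "tc a1 a2 a3 (4/3) (5/3) k = T3 a1 c k"
proof -
  have "tc a1 a2 a3 (4/3) (5/3) k = pochhammer a1 k * (pochhammer a2 k * pochhammer a3 k)
     / (pochhammer (4/3) k * pochhammer (5/3) k * fact k)"
    by (simp add: tc_def divide_divide_eq_left mult.assoc)
  also have "\<dots> = pochhammer a1 k * (pochhammer c (2*k) / 4^k) / (fact (3*k+2) / (2*27^k))"
    by (simp only: pair_poch[OF assms] d3)
  finally show ?thesis by (simp add: T3_def field_simps)
qed

definition W1 :: "nat \<Rightarrow> complex" where "W1 j = 27^j / (4^j * fact (3*j+6))"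
definition W2 :: "nat \<Rightarrow> complex" where "W2 j = 27^j / (4^j * fact (3*j+7))"

lemma T1_W: "T1 a c (Suc(Suc j)) = pochhammer a (Suc(Suc j)) * pochhammer c (2*Suc(Suc j)) * (729/16) * W1 j"
proof -
  have "3*Suc(Suc j) = 3*j+6" by simp
  then show ?thesis unfolding T1_def W1_def by (simp add: field_simps)
qed

lemma T2_W: "T2 a c (Suc(Suc j)) = pochhammer a (Suc(Suc j)) * pochhammer c (2*Suc(Suc j)) * (729/16) * W2 j"
proof -
  have "3*Suc(Suc j)+1 = 3*j+7" by simp
  then show ?thesis unfolding T2_def W2_def by (simp add: field_simps)
qed

lemma shift_aux:
  fixes X G u v :: complex
  assumes "G \<noteq> 0" "u \<noteq> 0" "v \<noteq> 0"
  shows "X * 27^(Suc j) / (4^(Suc j) * G) = X * (27/4) * u * v * (27^j / (4^j * (G * (u * v))))"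
  using assms by (simp add: field_simps)

lemma nz_lin: "(3 * of_nat j + of_nat (Suc m) :: complex) \<noteq> 0"
proof -
  have "(3 * of_nat j + of_nat (Suc m) :: complex) = of_nat (3*j + Suc m)" by simp
  also have "\<dots> \<noteq> 0" by (simp only: of_nat_eq_0_iff)
  finally show ?thesis .
qed

lemma nz5: "(3 * of_nat j + 5 :: complex) \<noteq> 0" using nz_lin[of j 4] by simp
lemma nz6: "(3 * of_nat j + 6 :: complex) \<noteq> 0" using nz_lin[of j 5] by simp
lemma nz7: "(3 * of_nat j + 7 :: complex) \<noteq> 0" using nz_lin[of j 6] by simp

lemma T2_W1: "T2 a c (Suc j) = pochhammer a (Suc j) * pochhammer c (2*Suc j) * (27/4) * (3 * of_nat j+5) * (3 * of_nat j+6) * W1 j"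
proof -
  have e: "3*j+6 = Suc (Suc (3*Suc j+1))" by simp
  have f: "fact (3*j+6) = (fact (3*Suc j+1) :: complex) * ((3 * of_nat j+5) * (3 * of_nat j+6))"
    unfolding e fact_Suc by (simp add: algebra_simps)
  show ?thesis unfolding T2_def W1_def f
    by (rule shift_aux[of "fact (3*Suc j+1)" "3 * of_nat j+5" "3 * of_nat j+6" "pochhammer a (Suc j) * pochhammer c (2*Suc j)" j, OF fact_nonzero nz5 nz6])
qed

lemma T3_W2: "T3 a c (Suc j) = 2 * pochhammer a (Suc j) * pochhammer c (2*Suc j) * (27/4) * (3 * of_nat j+6) * (3 * of_nat j+7) * W2 j"
proof -
  have e: "3*j+7 = Suc (Suc (3*Suc j+2))" by simp
  have f: "fact (3*j+7) = (fact (3*Suc j+2) :: complex) * ((3 * of_nat j+6) * (3 * of_nat j+7))"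
    unfolding e fact_Suc by (simp add: algebra_simps)
  show ?thesis unfolding T3_def W2_def f
    using shift_aux[of "fact (3*Suc j+2)" "3 * of_nat j+6" "3 * of_nat j+7" "2 * pochhammer a (Suc j) * pochhammer c (2*Suc j)" j, OF fact_nonzero nz6 nz7]
    by (simp only: mult.assoc)
qed

lemma gp1: "a + 2 = q \<Longrightarrow> pochhammer (a::complex) (Suc (Suc j)) = a * (a+1) * pochhammer q j"
  by (auto simp: pochhammer_rec add.assoc)
lemma gp2: "a + 1 = q \<Longrightarrow> pochhammer (a::complex) (Suc (Suc j)) = a * pochhammer q j * (q + of_nat j)"
proof -
  assume h: "a + 1 = q"
  have "pochhammer a (Suc (Suc j)) = a * pochhammer (a+1) (Suc j)" by (rule pochhammer_rec)
  also have "\<dots> = a * (pochhammer (a+1) j * (a + 1 + of_nat j))" by (simp only: pochhammer_Suc)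
  finally show ?thesis by (simp add: h[symmetric] mult.assoc)
qed
lemma gp3: "pochhammer (q::complex) (Suc (Suc j)) = pochhammer q j * (q + of_nat j) * (q + of_nat j + 1)"
  by (simp add: pochhammer_Suc algebra_simps)
lemma gp4: "a + 1 = q \<Longrightarrow> pochhammer (a::complex) (Suc j) = a * pochhammer q j"
  by (auto simp: pochhammer_rec)
lemma gr1: "pochhammer (c::complex) (2*Suc (Suc j)) = pochhammer c (2*Suc j) * (c + 2 * of_nat j + 2) * (c + 2 * of_nat j + 3)"
proof -
  have e2: "2*Suc(Suc j) = Suc(Suc(2*Suc j))" by simp
  show ?thesis unfolding e2 pochhammer_Suc[of c "Suc (2*Suc j)"] pochhammer_Suc[of c "2*Suc j"]
    by (simp add: algebra_simps)
qed
lemma gr2: "b + 1 = c \<Longrightarrow> pochhammer (b::complex) (2*Suc (Suc j)) = b * pochhammer c (2*Suc j) * (c + 2 * of_nat j + 2)"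
proof -
  assume h: "b + 1 = c"
  have e2: "2*Suc(Suc j) = Suc(Suc(2*Suc j))" by simp
  show ?thesis unfolding e2 pochhammer_rec[of b] h pochhammer_Suc[of c "2*Suc j"]
    by (simp add: algebra_simps)
qed
lemma gr3: "b + 2 = c \<Longrightarrow> pochhammer (b::complex) (2*Suc (Suc j)) = b * (b+1) * pochhammer c (2*Suc j)"
proof -
  assume h: "b + 2 = c"
  have h': "b + 1 + 1 = c" using h by (simp add: add.assoc)
  have e2: "2*Suc(Suc j) = Suc(Suc(2*Suc j))" by simp
  show ?thesis unfolding e2 pochhammer_rec[of b] pochhammer_rec[of "b+1"] h'
    by (simp add: algebra_simps)
qed

lemma core1:
  fixes N :: complex
  shows "(3) * T1 (-N-1) (N+1) (Suc k) + (-6) * T1 (-N) (N) (Suc k) + (3) * T1 (-N+1) (N-1) (Suc k)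
     = - ((3*N+1)*27/4) * T2 (-N) (N+1) k"
proof (cases k)
  case 0
  then show ?thesis by (simp add: T1_def T2_def T3_def eval_nat_numeral pochhammer_Suc fact_Suc field_simps)
next
  case (Suc j)
  have p1: "pochhammer (-N-1) (Suc(Suc j)) = (-N-1)*(-N-1+1)*pochhammer (-N+1) j"
    by (rule gp1) simp
  have p2: "pochhammer (-N) (Suc(Suc j)) = (-N)*pochhammer (-N+1) j*(-N+1 + of_nat j)"
    by (rule gp2) simp
  have p3: "pochhammer (-N+1) (Suc(Suc j)) = pochhammer (-N+1) j * (-N+1 + of_nat j) * (-N+1 + of_nat j + 1)"
    by (rule gp3)
  have p4: "pochhammer (-N) (Suc j) = (-N)*pochhammer (-N+1) j"
    by (rule gp4) simp
  have r1: "pochhammer (N+1) (2*Suc(Suc j)) = pochhammer (N+1) (2*Suc j) * (N+1 + 2 * of_nat j + 2) * (N+1 + 2 * of_nat j + 3)"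
    by (rule gr1)
  have r2: "pochhammer (N) (2*Suc(Suc j)) = (N) * pochhammer (N+1) (2*Suc j) * (N+1 + 2 * of_nat j + 2)"
    by (rule gr2) simp
  have r3: "pochhammer (N-1) (2*Suc(Suc j)) = (N-1) * (N-1 + 1) * pochhammer (N+1) (2*Suc j)"
    by (rule gr3) simp
  show ?thesis unfolding Suc T1_W T2_W1 p1 p2 p3 p4 r1 r2 r3
    by algebra
qed

lemma core2:
  fixes N :: complex
  shows "(3*N+4) * T2 (-N-1) (N+2) (Suc k) + (-2*(3*N+1)) * T2 (-N) (N+1) (Suc k) + (3*N-2) * T2 (-N+1) (N) (Suc k)
     = - ((N+1)*(3*N+2)*27/8) * T3 (-N) (N+2) k"
proof (cases k)
  case 0
  then show ?thesis by (simp add: T1_def T2_def T3_def eval_nat_numeral pochhammer_Suc fact_Suc field_simps)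
next
  case (Suc j)
  have p1: "pochhammer (-N-1) (Suc(Suc j)) = (-N-1)*(-N-1+1)*pochhammer (-N+1) j"
    by (rule gp1) simp
  have p2: "pochhammer (-N) (Suc(Suc j)) = (-N)*pochhammer (-N+1) j*(-N+1 + of_nat j)"
    by (rule gp2) simp
  have p3: "pochhammer (-N+1) (Suc(Suc j)) = pochhammer (-N+1) j * (-N+1 + of_nat j) * (-N+1 + of_nat j + 1)"
    by (rule gp3)
  have p4: "pochhammer (-N) (Suc j) = (-N)*pochhammer (-N+1) j"
    by (rule gp4) simp
  have r1: "pochhammer (N+2) (2*Suc(Suc j)) = pochhammer (N+2) (2*Suc j) * (N+2 + 2 * of_nat j + 2) * (N+2 + 2 * of_nat j + 3)"
    by (rule gr1)
  have r2: "pochhammer (N+1) (2*Suc(Suc j)) = (N+1) * pochhammer (N+2) (2*Suc j) * (N+2 + 2 * of_nat j + 2)"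
    by (rule gr2) simp
  have r3: "pochhammer (N) (2*Suc(Suc j)) = (N) * (N + 1) * pochhammer (N+2) (2*Suc j)"
    by (rule gr3) simp
  show ?thesis unfolding Suc T2_W T3_W2 p1 p2 p3 p4 r1 r2 r3
    by algebra
qed

lemma core3:
  fixes N :: complex
  shows "(1) * T1 (-N-1) (N+2) (Suc k) + (-2) * T1 (-N) (N+1) (Suc k) + (1) * T1 (-N+1) (N) (Suc k)
     = - ((N+1)*27/4) * T2 (-N) (N+2) k"
proof (cases k)
  case 0
  then show ?thesis by (simp add: T1_def T2_def T3_def eval_nat_numeral pochhammer_Suc fact_Suc field_simps)
next
  case (Suc j)
  have p1: "pochhammer (-N-1) (Suc(Suc j)) = (-N-1)*(-N-1+1)*pochhammer (-N+1) j"
    by (rule gp1) simp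
  have p2: "pochhammer (-N) (Suc(Suc j)) = (-N)*pochhammer (-N+1) j*(-N+1 + of_nat j)"
    by (rule gp2) simp
  have p3: "pochhammer (-N+1) (Suc(Suc j)) = pochhammer (-N+1) j * (-N+1 + of_nat j) * (-N+1 + of_nat j + 1)"
    by (rule gp3)
  have p4: "pochhammer (-N) (Suc j) = (-N)*pochhammer (-N+1) j"
    by (rule gp4) simp
  have r1: "pochhammer (N+2) (2*Suc(Suc j)) = pochhammer (N+2) (2*Suc j) * (N+2 + 2 * of_nat j + 2) * (N+2 + 2 * of_nat j + 3)"
    by (rule gr1)
  have r2: "pochhammer (N+1) (2*Suc(Suc j)) = (N+1) * pochhammer (N+2) (2*Suc j) * (N+2 + 2 * of_nat j + 2)"
    by (rule gr2) simp
  have r3: "pochhammer (N) (2*Suc(Suc j)) = (N) * (N + 1) * pochhammer (N+2) (2*Suc j)"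
    by (rule gr3) simp
  show ?thesis unfolding Suc T1_W T2_W1 p1 p2 p3 p4 r1 r2 r3
    by algebra
qed

lemma core4:
  fixes N :: complex
  shows "(N+2) * T2 (-N-1) (N+3) (Suc k) + (-2*(N+1)) * T2 (-N) (N+2) (Suc k) + (N) * T2 (-N+1) (N+1) (Suc k)
     = - ((N+1)*(N+2)*27/8) * T3 (-N) (N+3) k"
proof (cases k)
  case 0
  then show ?thesis by (simp add: T1_def T2_def T3_def eval_nat_numeral pochhammer_Suc fact_Suc field_simps)
next
  case (Suc j)
  have p1: "pochhammer (-N-1) (Suc(Suc j)) = (-N-1)*(-N-1+1)*pochhammer (-N+1) j"
    by (rule gp1) simp
  have p2: "pochhammer (-N) (Suc(Suc j)) = (-N)*pochhammer (-N+1) j*(-N+1 + of_nat j)"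
    by (rule gp2) simp
  have p3: "pochhammer (-N+1) (Suc(Suc j)) = pochhammer (-N+1) j * (-N+1 + of_nat j) * (-N+1 + of_nat j + 1)"
    by (rule gp3)
  have p4: "pochhammer (-N) (Suc j) = (-N)*pochhammer (-N+1) j"
    by (rule gp4) simp
  have r1: "pochhammer (N+3) (2*Suc(Suc j)) = pochhammer (N+3) (2*Suc j) * (N+3 + 2 * of_nat j + 2) * (N+3 + 2 * of_nat j + 3)"
    by (rule gr1)
  have r2: "pochhammer (N+2) (2*Suc(Suc j)) = (N+2) * pochhammer (N+3) (2*Suc j) * (N+3 + 2 * of_nat j + 2)"
    by (rule gr2) simp
  have r3: "pochhammer (N+1) (2*Suc(Suc j)) = (N+1) * (N+1 + 1) * pochhammer (N+3) (2*Suc j)"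
    by (rule gr3) simp
  show ?thesis unfolding Suc T2_W T3_W2 p1 p2 p3 p4 r1 r2 r3
    by algebra
qed

lemma hyp_T1:
  assumes "a1 = - of_nat p" "p < M" "(a2 = c/2 \<and> a3 = (c+1)/2) \<or> (a3 = c/2 \<and> a2 = (c+1)/2)"
  shows "hyp3F2 a1 a2 a3 (1/3) (2/3) x = (\<Sum>k<M. T1 a1 c k * x^k)"
proof -
  have "hyp3F2 a1 a2 a3 (1/3) (2/3) x = (\<Sum>k<M. tc a1 a2 a3 (1/3) (2/3) k * x^k)"
    by (rule hyp_fin) (use assms in \<open>auto intro: poch_zero\<close>)
  also have "\<dots> = (\<Sum>k<M. T1 a1 c k * x^k)"
    using conv1[OF assms(3)] by simp
  finally show ?thesis .
qed

lemma hyp_T2: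
  assumes "a1 = - of_nat p" "p < M" "(a2 = c/2 \<and> a3 = (c+1)/2) \<or> (a3 = c/2 \<and> a2 = (c+1)/2)"
  shows "hyp3F2 a1 a2 a3 (2/3) (4/3) x = (\<Sum>k<M. T2 a1 c k * x^k)"
proof -
  have "hyp3F2 a1 a2 a3 (2/3) (4/3) x = (\<Sum>k<M. tc a1 a2 a3 (2/3) (4/3) k * x^k)"
    by (rule hyp_fin) (use assms in \<open>auto intro: poch_zero\<close>)
  also have "\<dots> = (\<Sum>k<M. T2 a1 c k * x^k)"
    using conv2[OF assms(3)] by simp
  finally show ?thesis .
qed

lemma hyp_T3:
  assumes "a1 = - of_nat p" "p < M" "(a2 = c/2 \<and> a3 = (c+1)/2) \<or> (a3 = c/2 \<and> a2 = (c+1)/2)"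
  shows "hyp3F2 a1 a2 a3 (4/3) (5/3) x = (\<Sum>k<M. T3 a1 c k * x^k)"
proof -
  have "hyp3F2 a1 a2 a3 (4/3) (5/3) x = (\<Sum>k<M. tc a1 a2 a3 (4/3) (5/3) k * x^k)"
    by (rule hyp_fin) (use assms in \<open>auto intro: poch_zero\<close>)
  also have "\<dots> = (\<Sum>k<M. T3 a1 c k * x^k)"
    using conv3[OF assms(3)] by simp
  finally show ?thesis .
qed

lemma assemble:
  fixes A E :: "nat \<Rightarrow> complex"
  assumes "\<And>k. E (Suc k) = -K * A k" "E 0 = 0"
  shows "K * x * (\<Sum>k<m. A k * x^k) + (\<Sum>k<Suc m. E k * x^k) = 0"
proof -
  have "(\<Sum>k<Suc m. E k * x^k) = E 0 * x^0 + (\<Sum>k<m. E (Suc k) * x^Suc k)"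
    by (rule sum.lessThan_Suc_shift)
  also have "\<dots> = (\<Sum>k<m. -K * x * (A k * x^k))"
    using assms by (simp add: algebra_simps)
  also have "\<dots> = - (K * x * (\<Sum>k<m. A k * x^k))"
    by (simp add: sum_distrib_left sum_negf)
  finally show ?thesis by simp
qed

lemma sum_lin3:
  "(\<Sum>k<M. (c1 * f k + c2 * g k + c3 * h k) * (x::complex)^k)
   = c1 * (\<Sum>k<M. f k * x^k) + c2 * (\<Sum>k<M. g k * x^k) + c3 * (\<Sum>k<M. h k * x^k)"
  by (simp add: sum.distrib sum_distrib_left algebra_simps)

theorem proposition8:
  fixes n :: nat and x :: complex
  assumes "n \<ge> 1"
  defines "N \<equiv> (of_nat n :: complex)"
  shows
   "(3*N+1)*x/kappa * hyp3F2 (-N) ((N+1)/2) ((N+2)/2) (2/3) (4/3) x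
      + 3 * hyp3F2 (-N-1) ((N+2)/2) ((N+1)/2) (1/3) (2/3) x
      - 6 * hyp3F2 (-N) ((N+1)/2) (N/2) (1/3) (2/3) x
      + 3 * hyp3F2 (-N+1) (N/2) ((N-1)/2) (1/3) (2/3) x = 0 \<and>
    (N+1)*(3*N+2)*x/(2*kappa) * hyp3F2 (-N) ((N+3)/2) ((N+2)/2) (4/3) (5/3) x
      + (3*N+4) * hyp3F2 (-N-1) ((N+2)/2) ((N+3)/2) (2/3) (4/3) x
      - 2*(3*N+1) * hyp3F2 (-N) ((N+1)/2) ((N+2)/2) (2/3) (4/3) x
      + (3*N-2) * hyp3F2 (-N+1) (N/2) ((N+1)/2) (2/3) (4/3) x = 0 \<and>
    (N+1)*x/kappa * hyp3F2 (-N) ((N+3)/2) ((N+2)/2) (2/3) (4/3) x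
      + hyp3F2 (-N-1) ((N+2)/2) ((N+3)/2) (1/3) (2/3) x
      - 2 * hyp3F2 (-N) ((N+1)/2) ((N+2)/2) (1/3) (2/3) x
      + hyp3F2 (-N+1) (N/2) ((N+1)/2) (1/3) (2/3) x = 0 \<and>
    (N+1)*(N+2)*x/(2*kappa) * hyp3F2 (-N) ((N+4)/2) ((N+3)/2) (4/3) (5/3) x
      + (N+2) * hyp3F2 (-N-1) ((N+4)/2) ((N+3)/2) (2/3) (4/3) x
      - 2*(N+1) * hyp3F2 (-N) ((N+3)/2) ((N+2)/2) (2/3) (4/3) x
      + N * hyp3F2 (-N+1) ((N+2)/2) ((N+1)/2) (2/3) (4/3) x = 0"
proof -
  define m where "m = n + 1"
  have z0: "-N = - of_nat n" unfolding N_def by simp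
  have z1: "-N-1 = - of_nat (n+1)" unfolding N_def by simp
  have z2: "-N+1 = - of_nat (n-1)" unfolding N_def using assms(1) by (simp add: of_nat_diff)
  have lA: "n < m" and lB: "n + 1 < Suc m" and lC: "n < Suc m" and lD: "n - 1 < Suc m"
    unfolding m_def by auto
  note hT = hyp_T1 hyp_T2 hyp_T3
  have e1: "(3*N+1)*x/kappa * hyp3F2 (-N) ((N+1)/2) ((N+2)/2) (2/3) (4/3) x
      + 3 * hyp3F2 (-N-1) ((N+2)/2) ((N+1)/2) (1/3) (2/3) x
      - 6 * hyp3F2 (-N) ((N+1)/2) (N/2) (1/3) (2/3) x
      + 3 * hyp3F2 (-N+1) (N/2) ((N-1)/2) (1/3) (2/3) x = 0"
  proof -
    have hA: "hyp3F2 (-N) ((N+1)/2) ((N+2)/2) (2/3) (4/3) x = (\<Sum>k<m. T2 (-N) (N+1) k * x^k)"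
      by (rule hyp_T2[OF z0 lA]) (simp add: field_simps)
    have hB: "hyp3F2 (-N-1) ((N+2)/2) ((N+1)/2) (1/3) (2/3) x = (\<Sum>k<Suc m. T1 (-N-1) (N+1) k * x^k)"
      by (rule hyp_T1[OF z1 lB]) (simp add: field_simps)
    have hC: "hyp3F2 (-N) ((N+1)/2) (N/2) (1/3) (2/3) x = (\<Sum>k<Suc m. T1 (-N) N k * x^k)"
      by (rule hyp_T1[OF z0 lC]) (simp add: field_simps)
    have hD: "hyp3F2 (-N+1) (N/2) ((N-1)/2) (1/3) (2/3) x = (\<Sum>k<Suc m. T1 (-N+1) (N-1) k * x^k)"
      by (rule hyp_T1[OF z2 lD]) (simp add: field_simps)
    have "(3*N+1)*27/4 * x * (\<Sum>k<m. T2 (-N) (N+1) k * x^k)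
       + (\<Sum>k<Suc m. (3 * T1 (-N-1) (N+1) k + (-6) * T1 (-N) N k + 3 * T1 (-N+1) (N-1) k) * x^k) = 0"
      by (rule assemble) (use core1 in \<open>simp_all add: T1_def\<close>)
    then show ?thesis unfolding hA hB hC hD sum_lin3 kappa_def by (simp add: field_simps)
  qed
  have e2: "(N+1)*(3*N+2)*x/(2*kappa) * hyp3F2 (-N) ((N+3)/2) ((N+2)/2) (4/3) (5/3) x
      + (3*N+4) * hyp3F2 (-N-1) ((N+2)/2) ((N+3)/2) (2/3) (4/3) x
      - 2*(3*N+1) * hyp3F2 (-N) ((N+1)/2) ((N+2)/2) (2/3) (4/3) x
      + (3*N-2) * hyp3F2 (-N+1) (N/2) ((N+1)/2) (2/3) (4/3) x = 0"
  proof -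
    have hA: "hyp3F2 (-N) ((N+3)/2) ((N+2)/2) (4/3) (5/3) x = (\<Sum>k<m. T3 (-N) (N+2) k * x^k)"
      by (rule hyp_T3[OF z0 lA]) (simp add: field_simps)
    have hB: "hyp3F2 (-N-1) ((N+2)/2) ((N+3)/2) (2/3) (4/3) x = (\<Sum>k<Suc m. T2 (-N-1) (N+2) k * x^k)"
      by (rule hyp_T2[OF z1 lB]) (simp add: field_simps)
    have hC: "hyp3F2 (-N) ((N+1)/2) ((N+2)/2) (2/3) (4/3) x = (\<Sum>k<Suc m. T2 (-N) (N+1) k * x^k)"
      by (rule hyp_T2[OF z0 lC]) (simp add: field_simps)
    have hD: "hyp3F2 (-N+1) (N/2) ((N+1)/2) (2/3) (4/3) x = (\<Sum>k<Suc m. T2 (-N+1) N k * x^k)"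
      by (rule hyp_T2[OF z2 lD]) (simp add: field_simps)
    have "((N+1)*(3*N+2)*27/8) * x * (\<Sum>k<m. T3 (-N) (N+2) k * x^k)
       + (\<Sum>k<Suc m. ((3*N+4) * T2 (-N-1) (N+2) k + (-2*(3*N+1)) * T2 (-N) (N+1) k + (3*N-2) * T2 (-N+1) N k) * x^k) = 0"
      by (rule assemble) (use core2 in \<open>simp_all add: T2_def\<close>)
    then show ?thesis unfolding hA hB hC hD sum_lin3 kappa_def by (simp add: field_simps)
  qed
  have e3: "(N+1)*x/kappa * hyp3F2 (-N) ((N+3)/2) ((N+2)/2) (2/3) (4/3) x
      + hyp3F2 (-N-1) ((N+2)/2) ((N+3)/2) (1/3) (2/3) x
      - 2 * hyp3F2 (-N) ((N+1)/2) ((N+2)/2) (1/3) (2/3) x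
      + hyp3F2 (-N+1) (N/2) ((N+1)/2) (1/3) (2/3) x = 0"
  proof -
    have hA: "hyp3F2 (-N) ((N+3)/2) ((N+2)/2) (2/3) (4/3) x = (\<Sum>k<m. T2 (-N) (N+2) k * x^k)"
      by (rule hyp_T2[OF z0 lA]) (simp add: field_simps)
    have hB: "hyp3F2 (-N-1) ((N+2)/2) ((N+3)/2) (1/3) (2/3) x = (\<Sum>k<Suc m. T1 (-N-1) (N+2) k * x^k)"
      by (rule hyp_T1[OF z1 lB]) (simp add: field_simps)
    have hC: "hyp3F2 (-N) ((N+1)/2) ((N+2)/2) (1/3) (2/3) x = (\<Sum>k<Suc m. T1 (-N) (N+1) k * x^k)"
      by (rule hyp_T1[OF z0 lC]) (simp add: field_simps)
    have hD: "hyp3F2 (-N+1) (N/2) ((N+1)/2) (1/3) (2/3) x = (\<Sum>k<Suc m. T1 (-N+1) N k * x^k)"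
      by (rule hyp_T1[OF z2 lD]) (simp add: field_simps)
    have "((N+1)*27/4) * x * (\<Sum>k<m. T2 (-N) (N+2) k * x^k)
       + (\<Sum>k<Suc m. ((1) * T1 (-N-1) (N+2) k + (-2) * T1 (-N) (N+1) k + (1) * T1 (-N+1) N k) * x^k) = 0"
      by (rule assemble) (use core3 in \<open>simp_all add: T1_def\<close>)
    then show ?thesis unfolding hA hB hC hD sum_lin3 kappa_def by (simp add: field_simps)
  qed
  have e4: "(N+1)*(N+2)*x/(2*kappa) * hyp3F2 (-N) ((N+4)/2) ((N+3)/2) (4/3) (5/3) x
      + (N+2) * hyp3F2 (-N-1) ((N+4)/2) ((N+3)/2) (2/3) (4/3) x
      - 2*(N+1) * hyp3F2 (-N) ((N+3)/2) ((N+2)/2) (2/3) (4/3) x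
      + N * hyp3F2 (-N+1) ((N+2)/2) ((N+1)/2) (2/3) (4/3) x = 0"
  proof -
    have hA: "hyp3F2 (-N) ((N+4)/2) ((N+3)/2) (4/3) (5/3) x = (\<Sum>k<m. T3 (-N) (N+3) k * x^k)"
      by (rule hyp_T3[OF z0 lA]) (simp add: field_simps)
    have hB: "hyp3F2 (-N-1) ((N+4)/2) ((N+3)/2) (2/3) (4/3) x = (\<Sum>k<Suc m. T2 (-N-1) (N+3) k * x^k)"
      by (rule hyp_T2[OF z1 lB]) (simp add: field_simps)
    have hC: "hyp3F2 (-N) ((N+3)/2) ((N+2)/2) (2/3) (4/3) x = (\<Sum>k<Suc m. T2 (-N) (N+2) k * x^k)"
      by (rule hyp_T2[OF z0 lC]) (simp add: field_simps)
    have hD: "hyp3F2 (-N+1) ((N+2)/2) ((N+1)/2) (2/3) (4/3) x = (\<Sum>k<Suc m. T2 (-N+1) (N+1) k * x^k)"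
      by (rule hyp_T2[OF z2 lD]) (simp add: field_simps)
    have "((N+1)*(N+2)*27/8) * x * (\<Sum>k<m. T3 (-N) (N+3) k * x^k)
       + (\<Sum>k<Suc m. ((N+2) * T2 (-N-1) (N+3) k + (-2*(N+1)) * T2 (-N) (N+2) k + (N) * T2 (-N+1) (N+1) k) * x^k) = 0"
      by (rule assemble) (use core4 in \<open>simp_all add: T2_def\<close>)
    then show ?thesis unfolding hA hB hC hD sum_lin3 kappa_def by (simp add: field_simps)
  qed
  show ?thesis using e1 e2 e3 e4 by blast
qed

end
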